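(* For $\epsilon \in [0,1]$, let $F_\epsilon$ be the solution of $$F_\epsilon''(t) = (\epsilon - 3Q(t)^2)F_\epsilon(t), \quad t > 0, \qquad F_\epsilon(0) = 0,\ F_\epsilon'(0) = -1.$$ Then $F_\epsilon$ changes its sign at least once on $(0,\infty)$. Moreover, its first positive zero $t_\epsilon$ satisfies $t_\epsilon \ge t_0 > 0$, where $t_0$ is the first positive zero of $F_0$ (the solution for $\epsilon = 0$).
   Context: $Q(t)$, $t\ge 0$, denotes the radial profile of the positive radial ground state of $\Delta\phi - \phi + |\phi|^2\phi = 0$ on $\mathbb{R}^3$; it solves $-Q'' - \frac{2}{t}Q' + Q - Q^3 = 0$. *)

theory Defs
  imports "HOL-Analysis.Analysis"
begin

text \<open>Radial profile of the positive radial ground state of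
  Delta phi - phi + |phi|^2 phi = 0 on R^3: a positive function on [0,oo),
  regular at the origin (Q'(0) = 0), decaying to 0 at infinity, and solving
  -Q'' - (2/t) Q' + Q - Q^3 = 0 for t > 0.  Q' is the derivative of Q.
  (By the Coffman/Kwong uniqueness theorem this determines Q.)\<close>
definition ground_state_profile :: "(real \<Rightarrow> real) \<Rightarrow> (real \<Rightarrow> real) \<Rightarrow> bool" where
  "ground_state_profile Q Q' \<longleftrightarrow>
     (\<forall>t\<ge>0. Q t > 0) \<and>
     (Q has_real_derivative 0) (at 0 within {0..}) \<and>
     Q' 0 = 0 \<and>
     (\<forall>t>0. (Q has_real_derivative Q' t) (at t)) \<and>
     (\<forall>t>0. \<exists>Q''. (Q' has_real_derivative Q'') (at t) \<and>
              - Q'' - (2 / t) * Q' t + Q t - Q t ^ 3 = 0) \<and>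
     (Q \<longlongrightarrow> 0) at_top"

definition solves_F :: "(real \<Rightarrow> real) \<Rightarrow> real \<Rightarrow> (real \<Rightarrow> real) \<Rightarrow> (real \<Rightarrow> real) \<Rightarrow> bool" where
  "solves_F Q eps F F' \<longleftrightarrow>
     F 0 = 0 \<and>
     (F has_real_derivative -1) (at 0 within {0..}) \<and>
     F' 0 = -1 \<and>
     (\<forall>t>0. (F has_real_derivative F' t) (at t)) \<and>
     (\<forall>t>0. (F' has_real_derivative (eps - 3 * Q t ^ 2) * F t) (at t))"

end

theory Submission
  imports Defs
begin


lemma gs_facts:
  assumes "ground_state_profile Q Q'"
  shows "\<And>t. t \<ge> 0 \<Longrightarrow> Q t > 0"
    and "(Q has_real_derivative 0) (at 0 within {0..})"
    and "\<And>t. t > 0 \<Longrightarrow> (Q has_real_derivative Q' t) (at t)"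
    and "\<And>t. t > 0 \<Longrightarrow> (Q' has_real_derivative (Q t - Q t ^ 3 - 2 / t * Q' t)) (at t)"
    and "(Q \<longlongrightarrow> 0) at_top"
proof -
  show "\<And>t. t > 0 \<Longrightarrow> (Q' has_real_derivative (Q t - Q t ^ 3 - 2 / t * Q' t)) (at t)"
  proof -
    fix t :: real assume "t > 0"
    then obtain D where "(Q' has_real_derivative D) (at t)" "- D - (2 / t) * Q' t + Q t - Q t ^ 3 = 0"
      using assms unfolding ground_state_profile_def by blast
    moreover have "D = Q t - Q t ^ 3 - 2 / t * Q' t" using calculation(2) by linarith
    ultimately show "(Q' has_real_derivative (Q t - Q t ^ 3 - 2 / t * Q' t)) (at t)" by simp
  qed
qed (use assms in \<open>auto simp: ground_state_profile_def\<close>)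

lemma sf_facts:
  assumes "solves_F Q eps F F'"
  shows "F 0 = 0" "(F has_real_derivative -1) (at 0 within {0..})"
    "\<And>t. t > 0 \<Longrightarrow> (F has_real_derivative F' t) (at t)"
    "\<And>t. t > 0 \<Longrightarrow> (F' has_real_derivative (eps - 3 * Q t ^ 2) * F t) (at t)"
  using assms by (auto simp: solves_F_def)

lemma cont_from_deriv:
  fixes f :: "real \<Rightarrow> real"
  assumes "(f has_real_derivative d0) (at 0 within {0..})"
    and "\<And>t. t > 0 \<Longrightarrow> (f has_real_derivative g t) (at t)"
  shows "continuous_on {0..} f"
  unfolding continuous_on_eq_continuous_within
proof
  fix x :: real assume "x \<in> {0..}"
  show "continuous (at x within {0..}) f"
  proof (cases "x = 0")
    case True thus ?thesis using DERIV_continuous[OF assms(1)] by simp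
  next
    case False
    hence "x > 0" using \<open>x \<in> {0..}\<close> by auto
    thus ?thesis using DERIV_continuous[OF assms(2)[OF \<open>x>0\<close>]] continuous_at_imp_continuous_within by blast
  qed
qed

lemma tendsto_right0:
  fixes f :: "real \<Rightarrow> real"
  assumes "continuous_on {0..} f"
  shows "(f \<longlongrightarrow> f 0) (at_right 0)"
proof -
  have "(f \<longlongrightarrow> f 0) (at 0 within {0..})"
    using assms unfolding continuous_on_eq_continuous_within continuous_within by auto
  thus ?thesis by (rule tendsto_within_subset) auto
qed

lemma bound01:
  fixes f :: "real \<Rightarrow> real"
  assumes "continuous_on {0..} f"
  shows "\<exists>B. \<forall>t. 0 \<le> t \<and> t \<le> 1 \<longrightarrow> \<bar>f t\<bar> \<le> B"
proof -
  have "continuous_on {0..1} f" using assms by (rule continuous_on_subset) auto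
  hence "compact (f ` {0..1})" by (rule compact_continuous_image) simp
  then obtain B where "\<forall>y\<in>f ` {0..1}. norm y \<le> B" using compact_imp_bounded bounded_iff by metis
  thus ?thesis by (intro exI[of _ B]) auto
qed

lemma deriv_bound01:
  fixes F F' Q :: "real \<Rightarrow> real"
  assumes "ground_state_profile Q Q'" "solves_F Q eps F F'"
  shows "\<exists>M. \<forall>t. 0 < t \<and> t \<le> 1 \<longrightarrow> \<bar>F' t\<bar> \<le> M"
proof -
  note q = gs_facts[OF assms(1)] and f = sf_facts[OF assms(2)]
  obtain BQ where BQ: "\<forall>t. 0 \<le> t \<and> t \<le> 1 \<longrightarrow> \<bar>Q t\<bar> \<le> BQ"
    using bound01[OF cont_from_deriv[OF q(2) q(3)]] by blast
  obtain BF where BF: "\<forall>t. 0 \<le> t \<and> t \<le> 1 \<longrightarrow> \<bar>F t\<bar> \<le> BF"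
    using bound01[OF cont_from_deriv[OF f(2) f(3)]] by blast
  define M where "M = \<bar>F' 1\<bar> + (\<bar>eps\<bar> + 3 * BQ ^ 2) * BF"
  have "\<bar>F' t\<bar> \<le> M" if "0 < t" "t \<le> 1" for t
  proof (cases "t = 1")
    case True
    have "0 \<le> BF" using BF by force
    moreover have "0 \<le> BQ" using BQ by force
    ultimately show ?thesis using True by (simp add: M_def)
  next
    case False
    hence "t < 1" using that by simp
    have "\<exists>z>t. z < 1 \<and> F' 1 - F' t = (1 - t) * ((eps - 3 * Q z ^ 2) * F z)"
      by (rule MVT2[of t 1 F' "\<lambda>z. (eps - 3 * Q z ^ 2) * F z"]) (use \<open>t<1\<close> f(4) that in auto)
    then obtain z where z: "t < z" "z < 1" "F' 1 - F' t = (1 - t) * ((eps - 3 * Q z ^ 2) * F z)"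
      by blast
    have "\<bar>Q z\<bar> \<le> BQ" "\<bar>F z\<bar> \<le> BF" using BQ BF z that by auto
    hence "\<bar>Q z\<bar>^2 \<le> BQ^2" by (intro power_mono) auto
    hence "Q z^2 \<le> BQ^2" by simp
    moreover have "0 \<le> Q z ^ 2" by simp
    ultimately have "\<bar>eps - 3 * Q z ^ 2\<bar> \<le> \<bar>eps\<bar> + 3 * BQ ^ 2"
      by linarith
    hence "\<bar>(eps - 3 * Q z ^ 2) * F z\<bar> \<le> (\<bar>eps\<bar> + 3 * BQ ^ 2) * BF"
      unfolding abs_mult using \<open>\<bar>F z\<bar> \<le> BF\<close> by (intro mult_mono) auto
    moreover have "\<bar>(1 - t) * ((eps - 3 * Q z ^ 2) * F z)\<bar> \<le> \<bar>(eps - 3 * Q z ^ 2) * F z\<bar>"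
      unfolding abs_mult[of "1-t"] using that by (intro mult_left_le_one_le) auto
    ultimately show ?thesis using z(3) unfolding M_def by linarith
  qed
  thus ?thesis by blast
qed



lemma neg_near0:
  assumes "solves_F Q eps F F'"
  shows "\<exists>d>0. \<forall>t. 0 < t \<and> t < d \<longrightarrow> F t < 0"
proof -
  note f = sf_facts[OF assms]
  have "((\<lambda>y. (F y - F 0) / (y - 0)) \<longlongrightarrow> -1) (at 0 within {0..})"
    using f(2) has_field_derivative_iff by blast
  hence "((\<lambda>y. F y / y) \<longlongrightarrow> -1) (at_right 0)"
    using f(1) by (auto intro: tendsto_within_subset)
  hence "\<forall>\<^sub>F y in at_right 0. F y / y < 0" by (rule order_tendstoD) simp
  then obtain b where b: "b > 0" "\<forall>y>0. y < b \<longrightarrow> F y / y < 0"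
    unfolding eventually_at_right_field by auto
  have "F y < 0" if "0 < y" "y < b" for y
    using b(2) that by (simp add: divide_less_0_iff)
  thus ?thesis using b(1) by blast
qed

lemma Qprime_bound:
  assumes "ground_state_profile Q Q'"
  shows "\<exists>C. \<forall>t. 0 < t \<and> t \<le> 1 \<longrightarrow> \<bar>Q' t\<bar> \<le> C * t"
proof -
  note q = gs_facts[OF assms]
  have contQ: "continuous_on {0..} Q" by (rule cont_from_deriv[OF q(2) q(3)])
  obtain B where B: "\<forall>t. 0 \<le> t \<and> t \<le> 1 \<longrightarrow> \<bar>Q t\<bar> \<le> B"
    using bound01[OF contQ] by blast
  define K where "K = B + B ^ 3"
  define phi where "phi t = t^2 * Q' t" for t
  have dphi: "(phi has_real_derivative t^2 * (Q t - Q t ^ 3)) (at t)" if "t > 0" for t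
  proof -
    have "(phi has_real_derivative (2 * t * Q' t + t^2 * (Q t - Q t ^ 3 - 2 / t * Q' t))) (at t)"
      unfolding phi_def
      by (auto intro!: derivative_eq_intros q(4)[OF that])
    moreover have "2 * t * Q' t + t^2 * (Q t - Q t ^ 3 - 2 / t * Q' t) = t^2 * (Q t - Q t ^ 3)"
      using that by (simp add: field_simps power2_eq_square)
    ultimately show ?thesis by simp
  qed
  have Kb: "\<bar>Q x - Q x ^ 3\<bar> \<le> K" if "0 \<le> x" "x \<le> 1" for x
  proof -
    have "\<bar>Q x\<bar> \<le> B" using B that by auto
    hence "\<bar>Q x\<bar> ^ 3 \<le> B ^ 3" by (intro power_mono) auto
    hence "\<bar>Q x ^ 3\<bar> \<le> B ^ 3" by (simp add: power_abs)
    thus ?thesis using \<open>\<bar>Q x\<bar> \<le> B\<close> unfolding K_def by linarith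
  qed
  have phib: "\<bar>phi t - phi s\<bar> \<le> K * t ^ 3" if "0 < s" "s < t" "t \<le> 1" for s t
  proof -
    have "\<exists>z>s. z < t \<and> phi t - phi s = (t - s) * (z^2 * (Q z - Q z ^ 3))"
      by (rule MVT2) (use that dphi in auto)
    then obtain z where z: "s < z" "z < t" "phi t - phi s = (t - s) * (z^2 * (Q z - Q z ^ 3))" by blast
    have "\<bar>Q z - Q z ^ 3\<bar> \<le> K" using Kb z that by auto
    moreover have "z^2 \<le> t^2" using z that by (intro power_mono) auto
    moreover have "t - s \<le> t" using that by auto
    ultimately have le: "\<bar>t - s\<bar> * (\<bar>z^2\<bar> * \<bar>Q z - Q z ^ 3\<bar>) \<le> t * (t^2 * K)"
      using z that by (intro mult_mono) auto
    have "\<bar>phi t - phi s\<bar> = \<bar>t - s\<bar> * (\<bar>z^2\<bar> * \<bar>Q z - Q z ^ 3\<bar>)"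
      using z(3) by (simp only: abs_mult)
    also have "\<dots> \<le> t * (t^2 * K)" by (rule le)
    also have "\<dots> = K * t ^ 3" by (simp add: power3_eq_cube power2_eq_square)
    finally show ?thesis .
  qed
  have K0: "K \<ge> 0" using Kb[of 0] by auto
  have main: "\<bar>phi t\<bar> \<le> 2 * K * t ^ 3" if t: "0 < t" "t \<le> 1" for t
  proof (rule ccontr)
    assume neg: "\<not> ?thesis"
    define a where "a = \<bar>phi t\<bar>"
    have a: "a > 2 * K * t ^ 3" using neg a_def by simp
    have apos: "a > 0" using a K0 t by (smt (verit) mult_nonneg_nonneg zero_le_power)
    have big: "\<bar>phi s\<bar> > a / 2" if "0 < s" "s \<le> t" for s
    proof (cases "s = t")
      case True thus ?thesis using apos a_def by simp
    next
      case False
      hence "\<bar>phi t - phi s\<bar> \<le> K * t ^ 3" using phib[of s t] that t by auto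
      thus ?thesis using a a_def by linarith
    qed
    have "(Q \<longlongrightarrow> Q 0) (at_right 0)" by (rule tendsto_right0[OF contQ])
    hence "\<forall>\<^sub>F x in at_right 0. dist (Q x) (Q 0) < 1" by (rule tendstoD) simp
    then obtain b where b: "b > 0" "\<forall>x>0. x < b \<longrightarrow> \<bar>Q x - Q 0\<bar> < 1"
      unfolding eventually_at_right_field dist_real_def by auto
    define s where "s = min (t / 2) (min (b / 3) (a / 16))"
    have s: "0 < s" "2 * s \<le> t" "2 * s < b" "s \<le> a / 16"
      using t b apos unfolding s_def by auto
    have "\<exists>z>s. z < 2 * s \<and> Q (2 * s) - Q s = (2 * s - s) * Q' z"
      by (rule MVT2) (use s q(3) in auto)
    then obtain z where z: "s < z" "z < 2 * s" "Q (2 * s) - Q s = s * Q' z" by auto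
    have "\<bar>phi z\<bar> > a / 2" using big[of z] z s by auto
    hence "z^2 * \<bar>Q' z\<bar> > a / 2" unfolding phi_def by (simp add: abs_mult)
    moreover have "z^2 \<le> (2 * s)^2" using z s by (intro power_mono) auto
    ultimately have "(2 * s)^2 * \<bar>Q' z\<bar> > a / 2"
      by (smt (verit) abs_ge_zero mult_right_mono)
    hence "8 * s * (s * \<bar>Q' z\<bar>) > a" by (simp add: power2_eq_square algebra_simps)
    hence "(8 * s) * (s * \<bar>Q' z\<bar>) > (8 * s) * 2" using s(4) by linarith
    hence "s * \<bar>Q' z\<bar> > 2" using s(1) by (simp add: mult_less_cancel_left_pos)
    moreover have "\<bar>Q (2 * s) - Q s\<bar> < 2"
      using b(2)[rule_format, of s] b(2)[rule_format, of "2 * s"] s by auto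
    ultimately show False using z(3) s(1) by (simp add: abs_mult)
  qed
  have "\<bar>Q' t\<bar> \<le> (2 * K) * t" if "0 < t" "t \<le> 1" for t
  proof -
    have "t^2 * \<bar>Q' t\<bar> \<le> t^2 * ((2 * K) * t)"
      using main[OF that] unfolding phi_def by (simp add: abs_mult power3_eq_cube power2_eq_square algebra_simps)
    thus ?thesis using that by (simp add: mult_le_cancel_left)
  qed
  thus ?thesis by blast
qed



lemma first_zero:
  fixes f :: "real \<Rightarrow> real"
  assumes cont: "\<And>t. t > 0 \<Longrightarrow> isCont f t" and d: "d > 0"
    and pos: "\<And>t. 0 < t \<Longrightarrow> t < d \<Longrightarrow> f t > 0"
    and ex: "\<exists>t>0. f t \<le> 0"
  shows "\<exists>z>0. f z = 0 \<and> (\<forall>s. 0 < s \<and> s < z \<longrightarrow> f s > 0)"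
proof -
  define S where "S = {d/2..} \<inter> f -` {0}"
  obtain t where t: "t > 0" "f t \<le> 0" using ex by blast
  have "t \<ge> d" using pos[of t] t by force
  have fd2: "f (d/2) > 0" using pos d by auto
  have "\<exists>x\<ge>d/2. x \<le> t \<and> f x = 0"
    by (rule IVT2) (use t fd2 \<open>t \<ge> d\<close> d cont in auto)
  then obtain x where x: "x \<ge> d/2" "x \<le> t" "f x = 0" by blast
  have ne: "S \<noteq> {}" using x unfolding S_def by auto
  have bdd: "bdd_below S" unfolding S_def by (rule bdd_belowI[of _ "d/2"]) auto
  have "continuous_on {d/2..} f"
    using d cont by (intro continuous_at_imp_continuous_on) auto
  hence cl: "closed S" unfolding S_def by (intro continuous_closed_preimage) auto
  define z where "z = Inf S"
  have zS: "z \<in> S" unfolding z_def by (rule closed_contains_Inf[OF ne bdd cl])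
  hence z: "z \<ge> d/2" "f z = 0" unfolding S_def by auto
  have "f s > 0" if s: "0 < s" "s < z" for s
  proof (cases "s < d/2")
    case True thus ?thesis using pos s d by auto
  next
    case False
    show ?thesis
    proof (rule ccontr)
      assume "\<not> f s > 0"
      hence "\<exists>y\<ge>d/2. y \<le> s \<and> f y = 0"
        by (intro IVT2) (use False fd2 d cont s in auto)
      then obtain y where "y \<ge> d/2" "y \<le> s" "f y = 0" by blast
      hence "y \<in> S" unfolding S_def by auto
      hence "z \<le> y" unfolding z_def by (rule cInf_lower[OF _ bdd])
      thus False using \<open>y \<le> s\<close> s by simp
    qed
  qed
  thus ?thesis using z d by (intro exI[of _ z]) auto
qed

lemma H_facts:
  assumes gs: "ground_state_profile Q Q'"
  defines "H \<equiv> \<lambda>t. Q t + t * Q' t"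
  shows "\<And>t. t > 0 \<Longrightarrow> (H has_real_derivative (t * Q t - t * Q t ^ 3)) (at t)"
    and "\<exists>t1>0. H t1 = 0 \<and> (\<forall>s. 0 < s \<and> s < t1 \<longrightarrow> H s > 0)"
    and "(H \<longlongrightarrow> Q 0) (at_right 0)"
    and "((\<lambda>t. t * Q' t) \<longlongrightarrow> 0) (at_right 0)"
proof -
  note q = gs_facts[OF gs]
  have contQ: "continuous_on {0..} Q" by (rule cont_from_deriv[OF q(2) q(3)])
  show dH: "(H has_real_derivative (t * Q t - t * Q t ^ 3)) (at t)" if "t > 0" for t
  proof -
    have "(H has_real_derivative (Q' t + (1 * Q' t + t * (Q t - Q t ^ 3 - 2 / t * Q' t)))) (at t)"
      unfolding H_def by (auto intro!: derivative_eq_intros q(3)[OF that] q(4)[OF that])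
    moreover have "Q' t + (1 * Q' t + t * (Q t - Q t ^ 3 - 2 / t * Q' t)) = t * Q t - t * Q t ^ 3"
      using that by (simp add: field_simps)
    ultimately show ?thesis by simp
  qed
  have contH: "isCont H t" if "t > 0" for t using dH[OF that] by (rule DERIV_isCont)
  obtain C where C: "\<forall>t. 0 < t \<and> t \<le> 1 \<longrightarrow> \<bar>Q' t\<bar> \<le> C * t" using Qprime_bound[OF gs] by blast
  show tQ': "((\<lambda>t. t * Q' t) \<longlongrightarrow> 0) (at_right 0)"
  proof (rule Lim_null_comparison)
    show "\<forall>\<^sub>F x in at_right 0. norm (x * Q' x) \<le> C * x^2"
      unfolding eventually_at_right_field
    proof (intro exI[of _ 1] conjI allI impI)
      fix y :: real assume "0 < y" "y < 1"
      hence "\<bar>Q' y\<bar> \<le> C * y" using C by auto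
      hence "y * \<bar>Q' y\<bar> \<le> y * (C * y)" using \<open>0<y\<close> by (intro mult_left_mono) auto
      thus "norm (y * Q' y) \<le> C * y^2" using \<open>0<y\<close> by (simp add: abs_mult power2_eq_square algebra_simps)
    qed simp
    show "((\<lambda>x. C * x^2) \<longlongrightarrow> 0) (at_right 0)"
      by (auto intro!: tendsto_eq_intros)
  qed
  show Hlim: "(H \<longlongrightarrow> Q 0) (at_right 0)"
    unfolding H_def using tendsto_add[OF tendsto_right0[OF contQ] tQ'] by simp
  have "\<forall>\<^sub>F t in at_right 0. H t > 0" using Hlim q(1)[of 0] by (intro order_tendstoD) auto
  then obtain d where d: "d > 0" "\<forall>t>0. t < d \<longrightarrow> H t > 0"
    unfolding eventually_at_right_field by auto
  have ex: "\<exists>t>0. H t \<le> 0"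
  proof (rule ccontr)
    assume "\<not> ?thesis"
    hence Hp: "\<And>t. t > 0 \<Longrightarrow> H t > 0" by force
    obtain T0 where T0: "\<forall>t\<ge>T0. Q t < 1/2"
      using order_tendstoD(2)[OF q(5), of "1/2"] unfolding eventually_at_top_linorder by auto
    define T where "T = max T0 1"
    have T: "T \<ge> 1" "\<And>t. t \<ge> T \<Longrightarrow> Q t < 1/2" using T0 unfolding T_def by auto
    define u where "u t = t * Q t" for t
    have du: "(u has_real_derivative H t) (at t)" if "t > 0" for t
      unfolding u_def H_def by (auto intro!: derivative_eq_intros q(3)[OF that])
    define c where "c = 3/4 * u T"
    have c: "c > 0" unfolding c_def u_def using T q(1)[of T] by auto
    have umono: "u t \<ge> u T" if "t \<ge> T" for t
    proof (cases "t = T")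
      case False
      hence "\<exists>z>T. z < t \<and> u t - u T = (t - T) * H z"
        by (intro MVT2) (use that T du in auto)
      then obtain z where "z > T" "u t - u T = (t - T) * H z" by auto
      moreover have "H z > 0" using Hp \<open>z > T\<close> T by auto
      moreover have "(t - T) * H z \<ge> 0" using that \<open>H z > 0\<close> by simp
      ultimately show ?thesis by linarith
    qed simp
    have H'big: "t * Q t - t * Q t ^ 3 \<ge> c" if "t \<ge> T" for t
    proof -
      have q0: "0 < Q t" "Q t < 1/2" using q(1) T(2) that T by auto
      hence "Q t * Q t \<le> (1/2) * (1/2)" by (intro mult_mono) auto
      hence "Q t * (Q t * Q t) \<le> Q t * (1/4)" using q0 by (intro mult_left_mono) auto
      hence "Q t ^ 3 \<le> Q t / 4" by (simp add: power3_eq_cube)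
      hence "t * Q t ^ 3 \<le> t * (Q t / 4)" using that T by (intro mult_left_mono) auto
      hence "t * Q t - t * Q t ^ 3 \<ge> 3/4 * (t * Q t)" by simp
      thus ?thesis using umono[OF that] unfolding c_def u_def by linarith
    qed
    have Hbig: "H t \<ge> c" if "t \<ge> T + 1" for t
    proof -
      have "\<exists>z>T. z < t \<and> H t - H T = (t - T) * (z * Q z - z * Q z ^ 3)"
        by (intro MVT2) (use that T dH in auto)
      then obtain z where z: "z > T" "H t - H T = (t - T) * (z * Q z - z * Q z ^ 3)" by auto
      have "z * Q z - z * Q z ^ 3 \<ge> c" using H'big z by auto
      hence "(t - T) * (z * Q z - z * Q z ^ 3) \<ge> 1 * c" using that c by (intro mult_mono) auto
      moreover have "H T > 0" using Hp T by auto
      ultimately show ?thesis using z by linarith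
    qed
    have ubig: "u t \<ge> c * (t - T - 1)" if "t \<ge> T + 1" for t
    proof (cases "t = T + 1")
      case True thus ?thesis using q(1)[of t] T unfolding u_def by auto
    next
      case False
      hence "\<exists>z>T+1. z < t \<and> u t - u (T+1) = (t - (T+1)) * H z"
        by (intro MVT2) (use that T du in auto)
      then obtain z where z: "z > T+1" "u t - u (T+1) = (t - (T+1)) * H z" by auto
      have "H z \<ge> c" using Hbig z by auto
      hence "(t - (T+1)) * H z \<ge> (t - (T+1)) * c" using that by (intro mult_left_mono) auto
      moreover have "u (T+1) > 0" using q(1)[of "T+1"] T unfolding u_def by auto
      ultimately show ?thesis using z by (simp add: algebra_simps)
    qed
    obtain T1 where T1: "\<forall>t\<ge>T1. Q t < c/2"
      using order_tendstoD(2)[OF q(5), of "c/2"] c unfolding eventually_at_top_linorder by auto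
    define t where "t = max T1 (2 * T + 2)"
    have t: "t \<ge> T1" "t \<ge> 2 * T + 2" unfolding t_def by auto
    have "t * Q t \<ge> c * (t - T - 1)" using ubig[of t] t T unfolding u_def by auto
    moreover have "c * (t - T - 1) \<ge> c * (t / 2)" using c t by (intro mult_left_mono) auto
    moreover have "t * Q t < t * (c / 2)" using T1 t T by (intro mult_strict_left_mono) auto
    ultimately show False by (simp add: field_simps)
  qed
  show "\<exists>t1>0. H t1 = 0 \<and> (\<forall>s. 0 < s \<and> s < t1 \<longrightarrow> H s > 0)"
    by (rule first_zero[OF contH d(1)]) (use d ex in auto)
qed



lemma W_lim:
  fixes F F' G :: "real \<Rightarrow> real"
  assumes "\<exists>M. \<forall>t. 0 < t \<and> t \<le> 1 \<longrightarrow> \<bar>F' t\<bar> \<le> M"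
    and "(G \<longlongrightarrow> 0) (at_right 0)" and "(F \<longlongrightarrow> 0) (at_right 0)" and "(Gp \<longlongrightarrow> c) (at_right 0)"
  shows "((\<lambda>t. F' t * G t - F t * Gp t) \<longlongrightarrow> 0) (at_right 0)"
proof -
  obtain M where M: "\<forall>t. 0 < t \<and> t \<le> 1 \<longrightarrow> \<bar>F' t\<bar> \<le> M" using assms(1) by blast
  have "((\<lambda>t. F' t * G t) \<longlongrightarrow> 0) (at_right 0)"
  proof (rule Lim_null_comparison)
    show "\<forall>\<^sub>F x in at_right 0. norm (F' x * G x) \<le> M * \<bar>G x\<bar>"
      unfolding eventually_at_right_field
    proof (intro exI[of _ 1] conjI allI impI)
      fix y :: real assume "0 < y" "y < 1"
      thus "norm (F' y * G y) \<le> M * \<bar>G y\<bar>" using M by (auto simp: abs_mult intro: mult_right_mono)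
    qed simp
    show "((\<lambda>x. M * \<bar>G x\<bar>) \<longlongrightarrow> 0) (at_right 0)"
      using tendsto_mult[OF tendsto_const[of M] tendsto_rabs[OF assms(2)]] by simp
  qed
  moreover have "((\<lambda>t. F t * Gp t) \<longlongrightarrow> 0) (at_right 0)"
    using tendsto_mult[OF assms(3) assms(4)] by simp
  ultimately show ?thesis using tendsto_diff by fastforce
qed

lemma part1:
  assumes gs: "ground_state_profile Q Q'" and e: "0 \<le> eps" "eps \<le> 1"
    and sf: "solves_F Q eps F F'"
  shows "\<exists>t>0. F t > 0"
proof (rule ccontr)
  assume "\<not> ?thesis"
  hence Fle: "\<And>t. t > 0 \<Longrightarrow> F t \<le> 0" by force
  note q = gs_facts[OF gs] and f = sf_facts[OF sf]
  define H where "H t = Q t + t * Q' t" for t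
  have HF: "\<exists>t1>0. H t1 = 0 \<and> (\<forall>s. 0 < s \<and> s < t1 \<longrightarrow> H s > 0)"
    "(H \<longlongrightarrow> Q 0) (at_right 0)"
    using H_facts[OF gs] unfolding H_def by auto
  obtain t1 where t1: "t1 > 0" "H t1 = 0" "\<And>s. 0 < s \<Longrightarrow> s < t1 \<Longrightarrow> H s > 0" using HF(1) by blast
  define G where "G t = t * Q t + t^2 * Q' t" for t
  define Gp where "Gp t = Q t + t * Q' t + t^2 * Q t - t^2 * Q t ^ 3" for t
  define W where "W t = F' t * G t - F t * Gp t" for t
  have GH: "G t = t * H t" for t unfolding G_def H_def by (simp add: power2_eq_square algebra_simps)
  have dG: "(G has_real_derivative Gp t) (at t)" if "t > 0" for t
  proof -
    have "(G has_real_derivative (1 * Q t + t * Q' t + (2 * t * Q' t + t^2 * (Q t - Q t ^ 3 - 2 / t * Q' t)))) (at t)"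
      unfolding G_def by (auto intro!: derivative_eq_intros q(3)[OF that] q(4)[OF that])
    moreover have "1 * Q t + t * Q' t + (2 * t * Q' t + t^2 * (Q t - Q t ^ 3 - 2 / t * Q' t)) = Gp t"
      unfolding Gp_def using that by (simp add: field_simps power2_eq_square)
    ultimately show ?thesis by simp
  qed
  have dW: "(W has_real_derivative ((eps - 1) * F t * G t - 2 * t * Q t * F t)) (at t)" if "t > 0" for t
  proof -
    have "(W has_real_derivative
       ((eps - 3 * Q t ^ 2) * F t * G t + F' t * Gp t
        - (F' t * Gp t + F t * (Q' t + (1 * Q' t + t * (Q t - Q t ^ 3 - 2 / t * Q' t))
            + (2 * t * Q t + t^2 * Q' t) - (2 * t * Q t ^ 3 + t^2 * (3 * Q t ^ 2 * Q' t)))))) (at t)"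
      unfolding W_def Gp_def
      by (rule derivative_eq_intros dG[OF that, unfolded Gp_def] f(3)[OF that] f(4)[OF that]
            q(3)[OF that] q(4)[OF that] refl | simp)+
    moreover have "(eps - 3 * Q t ^ 2) * F t * G t + F' t * Gp t
        - (F' t * Gp t + F t * (Q' t + (1 * Q' t + t * (Q t - Q t ^ 3 - 2 / t * Q' t))
            + (2 * t * Q t + t^2 * Q' t) - (2 * t * Q t ^ 3 + t^2 * (3 * Q t ^ 2 * Q' t))))
        = (eps - 1) * F t * G t - 2 * t * Q t * F t"
      unfolding G_def using that by (simp add: field_simps power2_eq_square power3_eq_cube)
    ultimately show ?thesis by simp
  qed

  have Gpos: "G t > 0" if "0 < t" "t < t1" for t using GH t1(3)[OF that] that by simp
  have dWnn: "(eps - 1) * F t * G t - 2 * t * Q t * F t \<ge> 0" if "0 < t" "t < t1" for t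
  proof -
    have "(eps - 1) * F t \<ge> 0" using e Fle[of t] that by (simp add: mult_nonpos_nonpos)
    hence "(eps - 1) * F t * G t \<ge> 0" using Gpos[OF that] by simp
    moreover have "2 * t * Q t * F t \<le> 0" using that q(1)[of t] Fle[of t]
      by (simp add: mult_nonneg_nonpos)
    ultimately show ?thesis by linarith
  qed
  have dWpos: "(eps - 1) * F t * G t - 2 * t * Q t * F t > 0" if "0 < t" "t < t1" "F t < 0" for t
  proof -
    have "(eps - 1) * F t \<ge> 0" using e Fle[of t] that by (simp add: mult_nonpos_nonpos)
    hence "(eps - 1) * F t * G t \<ge> 0" using Gpos[OF that(1,2)] by simp
    moreover have "2 * t * Q t > 0" using that q(1)[of t] by simp
    hence "2 * t * Q t * F t < 0" using that by (simp add: mult_pos_neg)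
    ultimately show ?thesis by linarith
  qed
  have Wmono: "W s \<le> W t" if "0 < s" "s \<le> t" "t \<le> t1" for s t
  proof (cases "s = t")
    case False
    hence "\<exists>z>s. z < t \<and> W t - W s = (t - s) * ((eps - 1) * F z * G z - 2 * z * Q z * F z)"
      by (intro MVT2) (use that dW in auto)
    then obtain z where z: "s < z" "z < t" "W t - W s = (t - s) * ((eps - 1) * F z * G z - 2 * z * Q z * F z)"
      by blast
    have "(t - s) * ((eps - 1) * F z * G z - 2 * z * Q z * F z) \<ge> 0"
      using dWnn[of z] z that by simp
    thus ?thesis using z by linarith
  qed simp
  have contQ: "continuous_on {0..} Q" by (rule cont_from_deriv[OF q(2) q(3)])
  have Wlim: "(W \<longlongrightarrow> 0) (at_right 0)"
    unfolding W_def
  proof (rule W_lim)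
    show "\<exists>M. \<forall>t. 0 < t \<and> t \<le> 1 \<longrightarrow> \<bar>F' t\<bar> \<le> M" by (rule deriv_bound01[OF gs sf])
    show "(G \<longlongrightarrow> 0) (at_right 0)"
      unfolding GH using tendsto_mult[OF tendsto_ident_at HF(2)] by simp
    show "(F \<longlongrightarrow> 0) (at_right 0)"
      using tendsto_right0[OF cont_from_deriv[OF f(2) f(3)]] f(1) by simp
    have "Gp = (\<lambda>t. H t + t^2 * Q t - t^2 * Q t ^ 3)" unfolding Gp_def H_def by auto
    moreover have "((\<lambda>t. H t + t^2 * Q t - t^2 * Q t ^ 3) \<longlongrightarrow> Q 0 + 0^2 * Q 0 - 0^2 * Q 0 ^ 3) (at_right 0)"
      by (intro tendsto_intros HF(2) tendsto_right0[OF contQ] tendsto_ident_at)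
    ultimately show "(Gp \<longlongrightarrow> Q 0) (at_right 0)" by simp
  qed
  have Wnn: "W t \<ge> 0" if "0 < t" "t \<le> t1" for t
  proof (rule tendsto_upperbound[OF Wlim])
    show "\<forall>\<^sub>F x in at_right 0. W x \<le> W t"
      unfolding eventually_at_right_field using that Wmono by (intro exI[of _ t]) auto
  qed simp
  obtain d where d: "d > 0" "\<And>t. 0 < t \<Longrightarrow> t < d \<Longrightarrow> F t < 0" using neg_near0[OF sf] by blast
  define ta where "ta = min (d/2) (t1/2)"
  have ta: "0 < ta" "ta < d" "ta < t1" using d t1 unfolding ta_def by auto
  have "\<exists>z>ta/2. z < ta \<and> W ta - W (ta/2) = (ta - ta/2) * ((eps - 1) * F z * G z - 2 * z * Q z * F z)"
    by (intro MVT2) (use ta dW in auto)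
  then obtain z where z: "ta/2 < z" "z < ta" "W ta - W (ta/2) = (ta - ta/2) * ((eps - 1) * F z * G z - 2 * z * Q z * F z)"
    by blast
  have "(eps - 1) * F z * G z - 2 * z * Q z * F z > 0" using dWpos[of z] d(2)[of z] z ta by auto
  hence "(ta - ta/2) * ((eps - 1) * F z * G z - 2 * z * Q z * F z) > 0" using ta by simp
  hence "W ta > W (ta/2)" using z(3) by linarith
  moreover have "W (ta/2) \<ge> 0" using Wnn ta by auto
  moreover have "W t1 \<ge> W ta" using Wmono ta by auto
  ultimately have W1: "W t1 > 0" by linarith
  have "Gp t1 \<le> 0"
  proof (rule ccontr)
    assume "\<not> Gp t1 \<le> 0"
    then obtain h0 where h0: "h0 > 0" "\<forall>h>0. h < h0 \<longrightarrow> G (t1 - h) < G t1"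
      using DERIV_pos_inc_left[OF dG[OF t1(1)]] by force
    define h where "h = min (h0/2) (t1/2)"
    have "G (t1 - h) < G t1" using h0 t1 unfolding h_def by auto
    moreover have "G (t1 - h) > 0" using Gpos[of "t1 - h"] h0 t1 unfolding h_def by auto
    moreover have "G t1 = 0" using GH t1 by simp
    ultimately show False by simp
  qed
  moreover have "W t1 = - F t1 * Gp t1" unfolding W_def using GH t1 by simp
  moreover have "F t1 \<le> 0" using Fle t1 by simp
  ultimately have "W t1 \<le> 0" by (simp add: mult_nonpos_nonpos)
  thus False using W1 by simp
qed



lemma bdd_zero:
  fixes a b :: "real \<Rightarrow> real"
  assumes "\<exists>M. \<forall>t. 0 < t \<and> t \<le> 1 \<longrightarrow> \<bar>a t\<bar> \<le> M" "(b \<longlongrightarrow> 0) (at_right 0)"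
  shows "((\<lambda>t. a t * b t) \<longlongrightarrow> 0) (at_right 0)"
proof -
  obtain M where M: "\<forall>t. 0 < t \<and> t \<le> 1 \<longrightarrow> \<bar>a t\<bar> \<le> M" using assms(1) by blast
  show ?thesis
  proof (rule Lim_null_comparison)
    show "\<forall>\<^sub>F x in at_right 0. norm (a x * b x) \<le> M * \<bar>b x\<bar>"
      unfolding eventually_at_right_field
    proof (intro exI[of _ 1] conjI allI impI)
      fix y :: real assume "0 < y" "y < 1"
      thus "norm (a y * b y) \<le> M * \<bar>b y\<bar>" using M by (auto simp: abs_mult intro: mult_right_mono)
    qed simp
    show "((\<lambda>x. M * \<bar>b x\<bar>) \<longlongrightarrow> 0) (at_right 0)"
      using tendsto_mult[OF tendsto_const[of M] tendsto_rabs[OF assms(2)]] by simp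
  qed
qed

lemma first_neg_zero:
  assumes gs: "ground_state_profile Q Q'" and e: "0 \<le> eps" "eps \<le> 1"
    and sf: "solves_F Q eps F F'"
  shows "\<exists>z>0. F z = 0 \<and> (\<forall>s. 0 < s \<and> s < z \<longrightarrow> F s < 0)"
proof -
  note f = sf_facts[OF sf]
  obtain d where d: "d > 0" "\<And>t. 0 < t \<Longrightarrow> t < d \<Longrightarrow> F t < 0" using neg_near0[OF sf] by blast
  obtain t where t: "t > 0" "F t > 0" using part1[OF gs e sf] by blast
  have "\<exists>z>0. - F z = 0 \<and> (\<forall>s. 0 < s \<and> s < z \<longrightarrow> - F s > 0)"
  proof (rule first_zero[OF _ d(1)])
    show "isCont (\<lambda>t. - F t) x" if "x > 0" for x
      using DERIV_isCont[OF f(3)[OF that]] by (intro continuous_intros)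
  qed (use d t in auto)
  thus ?thesis by auto
qed

theorem lemma6p1:
  fixes Q Q' F F' F0 F0' :: "real \<Rightarrow> real" and eps :: real
  assumes "ground_state_profile Q Q'"
    and "0 \<le> eps" and "eps \<le> 1"
    and "solves_F Q eps F F'"
    and "solves_F Q 0 F0 F0'"
  shows "(\<exists>s>0. \<exists>t>0. F s < 0 \<and> F t > 0) \<and>
         (\<exists>t_eps t0. t_eps > 0 \<and> F t_eps = 0 \<and> (\<forall>s. 0 < s \<and> s < t_eps \<longrightarrow> F s \<noteq> 0) \<and>
                    t0 > 0 \<and> F0 t0 = 0 \<and> (\<forall>s. 0 < s \<and> s < t0 \<longrightarrow> F0 s \<noteq> 0) \<and>
                    t0 \<le> t_eps)"
proof -
  note gs = assms(1) and e = assms(2,3) and sf = assms(4) and sf0 = assms(5)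
  note q = gs_facts[OF gs] and f = sf_facts[OF sf] and f0 = sf_facts[OF sf0]
  have P1: "\<exists>s>0. \<exists>t>0. F s < 0 \<and> F t > 0"
  proof -
    obtain d where d: "d > 0" "\<And>t. 0 < t \<Longrightarrow> t < d \<Longrightarrow> F t < 0" using neg_near0[OF sf] by blast
    obtain t where t: "t > 0" "F t > 0" using part1[OF gs e sf] by blast
    show ?thesis using d(1) d(2)[of "d/2"] t by (intro exI[of _ "d/2"]) auto
  qed
  obtain te where te: "te > 0" "F te = 0" "\<And>s. 0 < s \<Longrightarrow> s < te \<Longrightarrow> F s < 0"
    using first_neg_zero[OF gs e sf] by blast
  obtain t0 where t0: "t0 > 0" "F0 t0 = 0" "\<And>s. 0 < s \<Longrightarrow> s < t0 \<Longrightarrow> F0 s < 0"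
    using first_neg_zero[OF gs _ _ sf0] by auto
  have "t0 \<le> te"
  proof (rule ccontr)
    assume "\<not> t0 \<le> te"
    hence lt: "te < t0" by simp
    define V where "V t = F0' t * F t - F0 t * F' t" for t
    have dV: "(V has_real_derivative (- eps * F0 t * F t)) (at t)" if "t > 0" for t
    proof -
      have "(V has_real_derivative ((0 - 3 * Q t ^ 2) * F0 t * F t + F' t * F0' t
                - (F0' t * F' t + (eps - 3 * Q t ^ 2) * F t * F0 t))) (at t)"
        unfolding V_def
        by (rule derivative_eq_intros f(3)[OF that] f(4)[OF that] f0(3)[OF that] f0(4)[OF that] refl)+
      thus ?thesis by (simp add: algebra_simps)
    qed
    have dVle: "- eps * F0 t * F t \<le> 0" if "0 < t" "t < te" for t
    proof -
      have "F0 t * F t > 0" using te(3)[OF that] t0(3)[of t] that lt by (simp add: mult_neg_neg)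
      hence "eps * (F0 t * F t) \<ge> 0" using e by simp
      thus ?thesis by (simp add: mult.assoc)
    qed
    have Vmono: "V t \<le> V s" if "0 < s" "s \<le> t" "t \<le> te" for s t
    proof (cases "s = t")
      case False
      hence "\<exists>z>s. z < t \<and> V t - V s = (t - s) * (- eps * F0 z * F z)"
        by (intro MVT2) (use that dV in auto)
      then obtain z where z: "s < z" "z < t" "V t - V s = (t - s) * (- eps * F0 z * F z)" by blast
      have "(t - s) * (- eps * F0 z * F z) \<le> 0"
        using dVle[of z] z that by (simp add: mult_nonneg_nonpos)
      thus ?thesis using z by linarith
    qed simp
    have Vlim: "(V \<longlongrightarrow> 0) (at_right 0)"
    proof -
      have F0lim: "(F0 \<longlongrightarrow> 0) (at_right 0)"
        using tendsto_right0[OF cont_from_deriv[OF f0(2) f0(3)]] f0(1) by simp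
      have Flim: "(F \<longlongrightarrow> 0) (at_right 0)"
        using tendsto_right0[OF cont_from_deriv[OF f(2) f(3)]] f(1) by simp
      have "((\<lambda>t. F0' t * F t) \<longlongrightarrow> 0) (at_right 0)"
        by (rule bdd_zero[OF deriv_bound01[OF gs sf0] Flim])
      moreover have "((\<lambda>t. F' t * F0 t) \<longlongrightarrow> 0) (at_right 0)"
        by (rule bdd_zero[OF deriv_bound01[OF gs sf] F0lim])
      ultimately show ?thesis unfolding V_def using tendsto_diff by (fastforce simp: mult.commute)
    qed
    have Vle: "V t \<le> 0" if "0 < t" "t \<le> te" for t
    proof (rule tendsto_lowerbound[OF Vlim])
      show "\<forall>\<^sub>F x in at_right 0. V t \<le> V x"
        unfolding eventually_at_right_field using that Vmono by (intro exI[of _ t]) auto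
    qed simp
    define R where "R t = F t / F0 t" for t
    have dR: "(R has_real_derivative ((F' t * F0 t - F t * F0' t) / (F0 t * F0 t))) (at t)"
      if "0 < t" "t \<le> te" for t
      unfolding R_def using that lt t0(3)[of t]
      by (intro DERIV_divide f(3) f0(3)) auto
    have "\<exists>z>te/2. z < te \<and> R te - R (te/2) = (te - te/2) * ((F' z * F0 z - F z * F0' z) / (F0 z * F0 z))"
      by (intro MVT2) (use te dR in auto)
    then obtain z where z: "te/2 < z" "z < te"
      "R te - R (te/2) = (te - te/2) * ((F' z * F0 z - F z * F0' z) / (F0 z * F0 z))" by blast
    have "F' z * F0 z - F z * F0' z = - V z" unfolding V_def by (simp add: algebra_simps)
    hence "(F' z * F0 z - F z * F0' z) / (F0 z * F0 z) \<ge> 0"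
      using Vle[of z] z te by (simp add: divide_nonpos_nonneg)
    hence "(te - te/2) * ((F' z * F0 z - F z * F0' z) / (F0 z * F0 z)) \<ge> 0" using te by (intro mult_nonneg_nonneg) auto
    hence "R te \<ge> R (te/2)" using z(3) by linarith
    moreover have "R te = 0" unfolding R_def using te by simp
    moreover have "R (te/2) > 0" unfolding R_def using te(1) te(3)[of "te/2"] t0(3)[of "te/2"] lt
      by (simp add: divide_neg_neg)
    ultimately show False by simp
  qed
  thus ?thesis using P1 te t0 by (intro conjI P1 exI[of _ te] exI[of _ t0]) force+
qed


end
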